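(* Let $n_\text{in}\ge1$, $n_\text{out}\in\{2,3\}$, $\mathbf{W}\in\mathbb{R}^{n_\text{out}\times n_\text{in}}$, $\mathbf{b}\in\mathbb{R}^{n_\text{out}}$, $\mathbf{c}\in\mathbb{R}^{n_\text{in}}$, $\mathbf{U}=[\mathbf{u}_1\,\ldots\,\mathbf{u}_{n_\text{in}}]\in\mathbb{R}^{n_\text{in}\times n_\text{in}}$. For $r\in[0,1]$ let $\mathcal{P}(\mathbf{U})=\{\mathbf{c}+\sum_j\lambda_j\mathbf{u}_j:\lambda\in[0,1]^{n_\text{in}}\}$, $\mathcal{P}(\mathbf{U}^L_r)=\{\mathbf{c}+\lambda_1 r\mathbf{u}_1+\sum_{j\ge2}\lambda_j\mathbf{u}_j:\lambda\in[0,1]^{n_\text{in}}\}$, $\mathcal{P}(\mathbf{U}^R_r)=\{\mathbf{c}+r\mathbf{u}_1+\lambda_1(1-r)\mathbf{u}_1+\sum_{j\ge2}\lambda_j\mathbf{u}_j:\lambda\in[0,1]^{n_\text{in}}\}$, let $\mathcal{P}(\mathbf{V}),\mathcal{P}(\mathbf{V}^L_r),\mathcal{P}(\mathbf{V}^R_r)$ be their images under $\mathbf{x}\mapsto\mathbf{W}\mathbf{x}+\mathbf{b}$, and define $V_\text{red}(r)=\mathrm{Vol}(\mathcal{B}(\mathbf{V}))-\mathrm{Vol}(\mathcal{B}(\mathbf{V}^L_r)\cup\mathcal{B}(\mathbf{V}^R_r))$. Then $r=\tfrac12$ maximizes $V_\text{red}(r)$ over $r\in[0,1]$.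
   Context: For a parallelotope $\mathcal{P}\subset\mathbb{R}^{n_\text{out}}$, $\mathcal{B}(\cdot)$ denotes the smallest axis-aligned hyperrectangle containing it (the Cartesian product over coordinates of the interval between the minimal and maximal coordinate of its vertices); $\mathrm{Vol}$ is $n_\text{out}$-dimensional Lebesgue volume. *)

theory Defs
  imports "HOL-Analysis.Analysis"
begin

definition par_full :: "real^'n \<Rightarrow> real^'n^'n \<Rightarrow> (real^'n) set" where
  "par_full c U = {c + (\<Sum>j\<in>UNIV. (l $ j) *\<^sub>R column j U) | l.
       \<forall>j. 0 \<le> l $ j \<and> l $ j \<le> 1}"

text \<open>Left piece P(U^L_r): column k (the split column u_1) scaled by r.\<close>
definition par_left :: "real^'n \<Rightarrow> real^'n^'n \<Rightarrow> 'n \<Rightarrow> real \<Rightarrow> (real^'n) set" where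
  "par_left c U k r = {c + (\<Sum>j\<in>UNIV. (if j = k then r * l $ j else l $ j) *\<^sub>R column j U) | l.
       \<forall>j. 0 \<le> l $ j \<and> l $ j \<le> 1}"

definition par_right :: "real^'n \<Rightarrow> real^'n^'n \<Rightarrow> 'n \<Rightarrow> real \<Rightarrow> (real^'n) set" where
  "par_right c U k r = {c + r *\<^sub>R column k U
       + (\<Sum>j\<in>UNIV. (if j = k then (1 - r) * l $ j else l $ j) *\<^sub>R column j U) | l.
       \<forall>j. 0 \<le> l $ j \<and> l $ j \<le> 1}"

definition aff_img :: "real^'n^'m \<Rightarrow> real^'m \<Rightarrow> (real^'n) set \<Rightarrow> (real^'m) set" where
  "aff_img W b S = (\<lambda>x. W *v x + b) ` S"

definition bbox :: "(real^'m) set \<Rightarrow> (real^'m) set" where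
  "bbox S = cbox (\<chi> i. INF y\<in>S. y $ i) (\<chi> i. SUP y\<in>S. y $ i)"

definition V_red :: "real^'n^'m \<Rightarrow> real^'m \<Rightarrow> real^'n \<Rightarrow> real^'n^'n \<Rightarrow> 'n \<Rightarrow> real \<Rightarrow> real" where
  "V_red W b c U k r =
     measure lebesgue (bbox (aff_img W b (par_full c U)))
     - measure lebesgue (bbox (aff_img W b (par_left c U k r)) \<union> bbox (aff_img W b (par_right c U k r)))"

end

theory Submission
  imports Defs
begin

lemma meas_cbox_cart:
  fixes a b :: "real^'m"
  assumes "\<forall>i. a$i \<le> b$i"
  shows "measure lebesgue (cbox a b) = (\<Prod>i\<in>UNIV. b$i - a$i)"
proof -
  have "a \<in> cbox a b" using assms by (simp add: mem_box_cart)
  then have "cbox a b \<noteq> {}" by blast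
  then show ?thesis by (simp add: content_cbox_cart)
qed

lemma aff_sum:
 "(W::real^'n^'m) *v (c + (\<Sum>j\<in>UNIV. f j *\<^sub>R u j)) + b = (W *v c + b) + (\<Sum>j\<in>UNIV. f j *\<^sub>R (W *v u j))"
  by (simp add: matrix_vector_right_distrib linear_sum linear_cmul matrix_vector_mul_linear)

lemma lmx: fixes l x :: real assumes "0 \<le> l" "l \<le> 1"
  shows "min 0 x \<le> l * x \<and> l * x \<le> max 0 x"
proof (cases "x \<ge> 0")
  case True
  then show ?thesis using assms by (simp add: mult_left_le_one_le)
next
  case False
  then have "l * x \<le> 0" using assms by (simp add: mult_nonneg_nonpos)
  moreover have "x \<le> l * x" using assms False by (smt (verit) mult_left_le_one_le mult_minus_right)
  ultimately show ?thesis using False by simp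
qed

definition G :: "real^'m \<Rightarrow> ('n::finite \<Rightarrow> real^'m) \<Rightarrow> ('n \<Rightarrow> real) \<Rightarrow> (real^'m) set" where
  "G p v a = {p + (\<Sum>j\<in>UNIV. (a j * l$j) *\<^sub>R v j) | l::real^'n. \<forall>j. 0 \<le> l$j \<and> l$j \<le> 1}"

lemma memG: "\<forall>j. 0 \<le> l$j \<and> l$j \<le> 1 \<Longrightarrow> p + (\<Sum>j\<in>UNIV. (a j * l$j) *\<^sub>R v j) \<in> G p v a"
  unfolding G_def by blast

lemma G_comp: "(p + (\<Sum>j\<in>UNIV. (a j * l$j) *\<^sub>R v j)) $ i = p$i + (\<Sum>j\<in>UNIV. l$j * (a j * v j $ i))"
  by (simp add: sum_component algebra_simps)

lemma bbox_G:
  fixes p :: "real^'m" and v :: "'n::finite \<Rightarrow> real^'m"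
  shows "bbox (G p v a) = cbox (\<chi> i. p$i + (\<Sum>j\<in>UNIV. min 0 (a j * v j $ i))) (\<chi> i. p$i + (\<Sum>j\<in>UNIV. max 0 (a j * v j $ i)))"
proof -
  have inf: "(INF y\<in>G p v a. y $ i) = p$i + (\<Sum>j\<in>UNIV. min 0 (a j * v j $ i))" for i
    unfolding image_def[symmetric]
  proof (rule cInf_eq_minimum)
    let ?l = "(\<chi> j. if a j * v j $ i < 0 then 1 else 0) :: real^'n"
    have m1: "p + (\<Sum>j\<in>UNIV. (a j * ?l$j) *\<^sub>R v j) \<in> G p v a" by (rule memG) simp
    have m2: "(p + (\<Sum>j\<in>UNIV. (a j * ?l$j) *\<^sub>R v j)) $ i = p$i + (\<Sum>j\<in>UNIV. min 0 (a j * v j $ i))"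
      unfolding G_comp by (intro arg_cong2[where f="(+)"] refl sum.cong) auto
    show "p$i + (\<Sum>j\<in>UNIV. min 0 (a j * v j $ i)) \<in> (\<lambda>y. y $ i) ` G p v a"
      by (rule rev_image_eqI[where f="\<lambda>y. y $ i", OF m1 m2[symmetric]])
  next
    fix x assume "x \<in> (\<lambda>y. y $ i) ` G p v a"
    then obtain y where y: "y \<in> G p v a" "x = y $ i" by blast
    from y(1) obtain l :: "real^'n" where l: "\<forall>j. 0 \<le> l$j \<and> l$j \<le> 1" and ye: "y = p + (\<Sum>j\<in>UNIV. (a j * l$j) *\<^sub>R v j)"
      unfolding G_def by blast
    have x: "x = p$i + (\<Sum>j\<in>UNIV. l$j * (a j * v j $ i))" unfolding y(2) ye G_comp ..
    show "p$i + (\<Sum>j\<in>UNIV. min 0 (a j * v j $ i)) \<le> x"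
      unfolding x
    proof (intro add_left_mono sum_mono)
      fix j show "min 0 (a j * v j $ i) \<le> l$j * (a j * v j $ i)" using lmx[of "l$j" "a j * v j $ i"] l by auto
    qed
  qed
  have sup: "(SUP y\<in>G p v a. y $ i) = p$i + (\<Sum>j\<in>UNIV. max 0 (a j * v j $ i))" for i
    unfolding image_def[symmetric]
  proof (rule cSup_eq_maximum)
    let ?l = "(\<chi> j. if a j * v j $ i > 0 then 1 else 0) :: real^'n"
    have m1: "p + (\<Sum>j\<in>UNIV. (a j * ?l$j) *\<^sub>R v j) \<in> G p v a" by (rule memG) simp
    have m2: "(p + (\<Sum>j\<in>UNIV. (a j * ?l$j) *\<^sub>R v j)) $ i = p$i + (\<Sum>j\<in>UNIV. max 0 (a j * v j $ i))"
      unfolding G_comp by (intro arg_cong2[where f="(+)"] refl sum.cong) auto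
    show "p$i + (\<Sum>j\<in>UNIV. max 0 (a j * v j $ i)) \<in> (\<lambda>y. y $ i) ` G p v a"
      by (rule rev_image_eqI[where f="\<lambda>y. y $ i", OF m1 m2[symmetric]])
  next
    fix x assume "x \<in> (\<lambda>y. y $ i) ` G p v a"
    then obtain y where y: "y \<in> G p v a" "x = y $ i" by blast
    from y(1) obtain l :: "real^'n" where l: "\<forall>j. 0 \<le> l$j \<and> l$j \<le> 1" and ye: "y = p + (\<Sum>j\<in>UNIV. (a j * l$j) *\<^sub>R v j)"
      unfolding G_def by blast
    have x: "x = p$i + (\<Sum>j\<in>UNIV. l$j * (a j * v j $ i))" unfolding y(2) ye G_comp ..
    show "x \<le> p$i + (\<Sum>j\<in>UNIV. max 0 (a j * v j $ i))"
      unfolding x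
    proof (intro add_left_mono sum_mono)
      fix j show "l$j * (a j * v j $ i) \<le> max 0 (a j * v j $ i)" using lmx[of "l$j" "a j * v j $ i"] l by auto
    qed
  qed
  show ?thesis unfolding bbox_def inf sup ..
qed


lemma aff_img_G:
  fixes W :: "real^'n^'m" and U :: "real^'n^'n"
  shows "aff_img W b {p0 + (\<Sum>j\<in>UNIV. (a j * l$j) *\<^sub>R column j U) | l::real^'n. \<forall>j. 0 \<le> l$j \<and> l$j \<le> 1}
     = G (W *v p0 + b) (\<lambda>j. W *v column j U) a"
proof -
  have "aff_img W b {p0 + (\<Sum>j\<in>UNIV. (a j * l$j) *\<^sub>R column j U) | l::real^'n. \<forall>j. 0 \<le> l$j \<and> l$j \<le> 1}
     = {W *v (p0 + (\<Sum>j\<in>UNIV. (a j * l$j) *\<^sub>R column j U)) + b | l::real^'n. \<forall>j. 0 \<le> l$j \<and> l$j \<le> 1}"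
    unfolding aff_img_def by blast
  then show ?thesis unfolding G_def aff_sum .
qed

lemma arith1:
  fixes r d :: real assumes "0 \<le> r" "r \<le> 1"
  shows "max 0 (r*d) - min 0 (r*d) = r*\<bar>d\<bar>"
proof (cases "d \<ge> 0")
  case True
  then have "r*d \<ge> 0" using assms by simp
  then show ?thesis using True by auto
next
  case False
  then have "r*d \<le> 0" using assms by (simp add: mult_nonneg_nonpos)
  then show ?thesis using False by auto
qed

lemma arith2:
  fixes r d :: real assumes "0 \<le> r" "r \<le> 1"
  shows "max (min 0 (r*d)) (r*d + min 0 ((1-r)*d)) = r*d"
proof (cases "d \<ge> 0")
  case True
  then have "r*d \<ge> 0" "(1-r)*d \<ge> 0" using assms by simp_all
  then show ?thesis by auto
next
  case False
  then have "r*d \<le> 0" "(1-r)*d \<le> 0" using assms by (simp_all add: mult_nonneg_nonpos)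
  then show ?thesis by (auto simp: algebra_simps)
qed

lemma arith3:
  fixes r d :: real assumes "0 \<le> r" "r \<le> 1"
  shows "min (max 0 (r*d)) (r*d + max 0 ((1-r)*d)) = r*d"
proof (cases "d \<ge> 0")
  case True
  then have "r*d \<ge> 0" "(1-r)*d \<ge> 0" using assms by simp_all
  then show ?thesis by auto
next
  case False
  then have "r*d \<le> 0" "(1-r)*d \<le> 0" using assms by (simp_all add: mult_nonneg_nonpos)
  then show ?thesis by (auto simp: algebra_simps)
qed

lemma prod_ineq:
  fixes A x :: "'i \<Rightarrow> real"
  assumes "finite I" "\<forall>i\<in>I. 0 \<le> x i \<and> x i \<le> A i"
  shows "(\<Prod>i\<in>I. A i - x i) \<le> (\<Prod>i\<in>I. A i + x i) \<and> 0 \<le> (\<Prod>i\<in>I. A i - x i)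
     \<and> 2 * (\<Prod>i\<in>I. A i) \<le> (\<Prod>i\<in>I. A i + x i) + (\<Prod>i\<in>I. A i - x i)"
  using assms
proof (induction I rule: finite_induct)
  case empty
  then show ?case by simp
next
  case (insert j I)
  define P where "P = (\<Prod>i\<in>I. A i + x i)"
  define Q where "Q = (\<Prod>i\<in>I. A i - x i)"
  define R where "R = (\<Prod>i\<in>I. A i)"
  have IH: "Q \<le> P" "0 \<le> Q" "2 * R \<le> P + Q" using insert unfolding P_def Q_def R_def by auto
  have xj: "0 \<le> x j" "x j \<le> A j" using insert by auto
  have e: "(\<Prod>i\<in>insert j I. A i + x i) = (A j + x j) * P" "(\<Prod>i\<in>insert j I. A i - x i) = (A j - x j) * Q"
    "(\<Prod>i\<in>insert j I. A i) = A j * R" using insert unfolding P_def Q_def R_def by simp_all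
  have 1: "(A j - x j) * Q \<le> (A j + x j) * P" using IH xj by (intro mult_mono) auto
  have 2: "0 \<le> (A j - x j) * Q" using IH xj by simp
  have "2 * (A j * R) \<le> A j * (P + Q)" using mult_left_mono[OF IH(3), of "A j"] xj by (simp add: algebra_simps)
  also have "\<dots> \<le> A j * (P + Q) + x j * (P - Q)" using IH xj by simp
  finally have 3: "2 * (A j * R) \<le> (A j + x j) * P + (A j - x j) * Q" by (simp add: algebra_simps)
  show ?case unfolding e using 1 2 3 by blast
qed


lemma meas_G:
  fixes p :: "real^'m" and v :: "'n::finite \<Rightarrow> real^'m"
  shows "measure lebesgue (bbox (G p v a)) = (\<Prod>i\<in>UNIV. (\<Sum>j\<in>UNIV. max 0 (a j * v j $ i)) - (\<Sum>j\<in>UNIV. min 0 (a j * v j $ i)))"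
  unfolding bbox_G
  by (subst meas_cbox_cart) (auto intro!: sum_mono)

lemma cbox_Int_cart:
  fixes a b c d :: "real^'m"
  shows "cbox a b \<inter> cbox c d = cbox (\<chi> i. max (a$i) (c$i)) (\<chi> i. min (b$i) (d$i))"
  by (rule set_eqI) (auto simp: mem_box_cart)

lemma sum_if_k:
  fixes g :: "real \<Rightarrow> 'n::finite \<Rightarrow> real"
  shows "(\<Sum>j\<in>UNIV. g (if j = k then r else 1) j) = g r k + (\<Sum>j\<in>UNIV-{k}. g 1 j)"
proof -
  have "(\<Sum>j\<in>UNIV. g (if j = k then r else 1) j) = g (if k = k then r else 1) k + (\<Sum>j\<in>UNIV-{k}. g (if j = k then r else 1) j)"
    using sum.remove[of UNIV k "\<lambda>j. g (if j = k then r else 1) j"] by simp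
  also have "(\<Sum>j\<in>UNIV-{k}. g (if j = k then r else 1) j) = (\<Sum>j\<in>UNIV-{k}. g 1 j)"
    by (intro sum.cong) auto
  finally show ?thesis by simp
qed

lemma ifeq: "(if j = k then r * x else x) = (if j = k then r else 1) * (x::real)" by simp

lemma V_formula:
  fixes W :: "real^'n^'m" and b :: "real^'m" and c :: "real^'n"
    and U :: "real^'n^'n" and k :: 'n
  assumes r: "0 \<le> r" "r \<le> 1"
  defines "S \<equiv> \<lambda>i. (\<Sum>j\<in>UNIV-{k}. max 0 ((W *v column j U) $ i)) - (\<Sum>j\<in>UNIV-{k}. min 0 ((W *v column j U) $ i))"
    and "d \<equiv> \<lambda>i. (W *v column k U) $ i"
  shows "V_red W b c U k r = (\<Prod>i\<in>UNIV. S i + \<bar>d i\<bar>)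
     - ((\<Prod>i\<in>UNIV. S i + r * \<bar>d i\<bar>) + (\<Prod>i\<in>UNIV. S i + (1 - r) * \<bar>d i\<bar>) - (\<Prod>i\<in>UNIV. S i))"
proof -
  define v where "v = (\<lambda>j. W *v column j U)"
  define p where "p = W *v c + b"
  define m where "m = (\<lambda>i. (\<Sum>j\<in>UNIV-{k}. min 0 (v j $ i)))"
  define M where "M = (\<lambda>i. (\<Sum>j\<in>UNIV-{k}. max 0 (v j $ i)))"
  have Sd: "S = (\<lambda>i. M i - m i)" "d = (\<lambda>i. v k $ i)" unfolding S_def M_def m_def d_def v_def by auto
  have EF: "aff_img W b (par_full c U) = G p v (\<lambda>j. if j = k then 1 else 1)"
    unfolding p_def v_def aff_img_G[symmetric] par_full_def by simp
  have EL: "aff_img W b (par_left c U k r) = G p v (\<lambda>j. if j = k then r else 1)"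
    unfolding p_def v_def aff_img_G[symmetric] par_left_def ifeq by simp
  have pe: "p + r *\<^sub>R v k = W *v (c + r *\<^sub>R column k U) + b"
    unfolding p_def v_def by (simp add: matrix_vector_right_distrib matrix_vector_mult_scaleR algebra_simps)
  have ER: "aff_img W b (par_right c U k r) = G (p + r *\<^sub>R v k) v (\<lambda>j. if j = k then 1 - r else 1)"
    unfolding pe unfolding v_def aff_img_G[symmetric] par_right_def ifeq by simp
  have sumk: "(\<Sum>j\<in>UNIV. f (if j = k then t else 1) (v j $ i)) = f t (d i) + (\<Sum>j\<in>UNIV-{k}. f 1 (v j $ i))" for f :: "real \<Rightarrow> real \<Rightarrow> real" and t i
    using sum_if_k[of "\<lambda>a j. f a (v j $ i)" k t] unfolding Sd by simp
  have wd: "(\<Sum>j\<in>UNIV. max 0 ((if j = k then t else 1) * v j $ i)) - (\<Sum>j\<in>UNIV. min 0 ((if j = k then t else 1) * v j $ i)) = S i + t * \<bar>d i\<bar>"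
    if "0 \<le> t" "t \<le> 1" for t i
    using sumk[of "\<lambda>a x. max 0 (a * x)" t i] sumk[of "\<lambda>a x. min 0 (a * x)" t i] arith1[OF that, of "d i"]
    unfolding Sd M_def m_def by simp
  have r': "0 \<le> 1 - r" "1 - r \<le> 1" using r by auto
  have mF: "measure lebesgue (bbox (aff_img W b (par_full c U))) = (\<Prod>i\<in>UNIV. S i + \<bar>d i\<bar>)"
    unfolding EF meas_G wd[OF zero_le_one order_refl] by simp
  have mL: "measure lebesgue (bbox (aff_img W b (par_left c U k r))) = (\<Prod>i\<in>UNIV. S i + r * \<bar>d i\<bar>)"
    unfolding EL meas_G wd[OF r] by simp
  have mR: "measure lebesgue (bbox (aff_img W b (par_right c U k r))) = (\<Prod>i\<in>UNIV. S i + (1 - r) * \<bar>d i\<bar>)"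
    unfolding ER meas_G wd[OF r'] by simp
  have mI: "measure lebesgue (bbox (aff_img W b (par_left c U k r)) \<inter> bbox (aff_img W b (par_right c U k r))) = (\<Prod>i\<in>UNIV. S i)"
  proof -
    have lo: "max (p$i + (\<Sum>j\<in>UNIV. min 0 ((if j = k then r else 1) * v j $ i)))
                ((p + r *\<^sub>R v k)$i + (\<Sum>j\<in>UNIV. min 0 ((if j = k then 1 - r else 1) * v j $ i)))
              = p$i + r * d i + m i" for i
      using sumk[of "\<lambda>a x. min 0 (a * x)" r i] sumk[of "\<lambda>a x. min 0 (a * x)" "1-r" i] arith2[OF r, of "d i"]
      unfolding Sd M_def m_def by (simp add: max_def min_def split: if_splits) linarith?
    have hi: "min (p$i + (\<Sum>j\<in>UNIV. max 0 ((if j = k then r else 1) * v j $ i)))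
                ((p + r *\<^sub>R v k)$i + (\<Sum>j\<in>UNIV. max 0 ((if j = k then 1 - r else 1) * v j $ i)))
              = p$i + r * d i + M i" for i
      using sumk[of "\<lambda>a x. max 0 (a * x)" r i] sumk[of "\<lambda>a x. max 0 (a * x)" "1-r" i] arith3[OF r, of "d i"]
      unfolding Sd M_def m_def by (simp add: max_def min_def split: if_splits) linarith?
    have "M i \<ge> m i" for i unfolding M_def m_def by (intro sum_mono) auto
    then show ?thesis unfolding EL ER bbox_G cbox_Int_cart vec_lambda_beta lo hi
      by (subst meas_cbox_cart) (simp_all add: Sd)
  qed
  show ?thesis unfolding V_red_def
  proof (subst measure_Un3)
    show "bbox (aff_img W b (par_left c U k r)) \<in> lmeasurable" "bbox (aff_img W b (par_right c U k r)) \<in> lmeasurable"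
      unfolding bbox_def by simp_all
  qed (simp add: mF mL mR mI)
qed


theorem corollary2:
  fixes W :: "real^'n^'m" and b :: "real^'m" and c :: "real^'n"
    and U :: "real^'n^'n" and k :: 'n
  assumes "CARD('m) = 2 \<or> CARD('m) = 3"
  shows "\<forall>r\<in>{0..1}. V_red W b c U k r \<le> V_red W b c U k (1/2)"
proof (intro ballI)
  fix r :: real assume "r \<in> {0..1}"
  then have r: "0 \<le> r" "r \<le> 1" by auto
  define S where "S \<equiv> \<lambda>i. (\<Sum>j\<in>UNIV-{k}. max 0 ((W *v column j U) $ i)) - (\<Sum>j\<in>UNIV-{k}. min 0 ((W *v column j U) $ i))"
  define d where "d \<equiv> \<lambda>i. (W *v column k U) $ i"
  have V1: "V_red W b c U k r = (\<Prod>i\<in>UNIV. S i + \<bar>d i\<bar>)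
     - ((\<Prod>i\<in>UNIV. S i + r * \<bar>d i\<bar>) + (\<Prod>i\<in>UNIV. S i + (1 - r) * \<bar>d i\<bar>) - (\<Prod>i\<in>UNIV. S i))"
    unfolding S_def d_def by (rule V_formula[OF r])
  have V2: "V_red W b c U k (1/2) = (\<Prod>i\<in>UNIV. S i + \<bar>d i\<bar>)
     - ((\<Prod>i\<in>UNIV. S i + (1/2) * \<bar>d i\<bar>) + (\<Prod>i\<in>UNIV. S i + (1 - 1/2) * \<bar>d i\<bar>) - (\<Prod>i\<in>UNIV. S i))"
    unfolding S_def d_def by (rule V_formula) auto
  have S0: "0 \<le> S i" for i unfolding S_def by (simp add: sum_mono)
  define A where "A = (\<lambda>i. S i + \<bar>d i\<bar> / 2)"
  define x where "x = (\<lambda>i. \<bar>r - 1/2\<bar> * \<bar>d i\<bar>)"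
  have "\<bar>r - 1/2\<bar> \<le> 1/2" using r by (cases "r \<ge> 1/2") auto
  then have xd: "x i \<le> \<bar>d i\<bar> / 2" for i unfolding x_def using mult_right_mono[of "\<bar>r - 1/2\<bar>" "1/2" "\<bar>d i\<bar>"] by simp
  have "0 \<le> x i \<and> x i \<le> A i" for i unfolding A_def using S0[of i] xd[of i] by (simp add: x_def)
  then have "\<forall>i\<in>UNIV. 0 \<le> x i \<and> x i \<le> A i" by blast
  from prod_ineq[OF finite_class.finite_UNIV this] have key: "2 * (\<Prod>i\<in>UNIV. A i) \<le> (\<Prod>i\<in>UNIV. A i + x i) + (\<Prod>i\<in>UNIV. A i - x i)" by blast
  have eA: "(\<Prod>i\<in>UNIV. A i) = (\<Prod>i\<in>UNIV. S i + (1/2) * \<bar>d i\<bar>)" unfolding A_def by simp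
  have eX: "(\<Prod>i\<in>UNIV. A i + x i) + (\<Prod>i\<in>UNIV. A i - x i) = (\<Prod>i\<in>UNIV. S i + r * \<bar>d i\<bar>) + (\<Prod>i\<in>UNIV. S i + (1 - r) * \<bar>d i\<bar>)"
  proof (cases "r \<ge> 1/2")
    case True
    then have "A i + x i = S i + r * \<bar>d i\<bar>" "A i - x i = S i + (1 - r) * \<bar>d i\<bar>" for i
      unfolding A_def x_def by (auto simp: algebra_simps)
    then show ?thesis by simp
  next
    case False
    then have "A i + x i = S i + (1 - r) * \<bar>d i\<bar>" "A i - x i = S i + r * \<bar>d i\<bar>" for i
      unfolding A_def x_def by (auto simp: algebra_simps)
    then show ?thesis by simp
  qed
  show "V_red W b c U k r \<le> V_red W b c U k (1/2)"
    unfolding V1 V2 using key eA eX by simp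
qed

end
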